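(* Let $L=2$ and suppose, conditionally on the data $\mathbf y_1,\mathbf y_2$, that $f_1(\mathbf x)\sim\mathcal N(\mu_1^*(\mathbf x),\sigma_1^{*2}(\mathbf x))$ and $f_2(\mathbf x)\mid f_1(\mathbf x)\sim\mathcal N(\mu_2(\mathbf x,f_1(\mathbf x)),\sigma_2^2(\mathbf x,f_1(\mathbf x)))$. Then $\sigma_2^{*2}(\mathbf x):=\mathbb V[f_2(\mathbf x)\mid\mathbf y_1,\mathbf y_2]=V_1(\mathbf x)+V_2(\mathbf x)$, where $V_1(\mathbf x)=\mathbb V[\mathbb E[f_2(\mathbf x)\mid f_1(\mathbf x),\mathbf y_1,\mathbf y_2]]$ and $V_2(\mathbf x)=\mathbb E[\mathbb V[f_2(\mathbf x)\mid f_1(\mathbf x),\mathbf y_1,\mathbf y_2]]$ are given in closed form by $$V_1(\mathbf x)=-(\mu_2^*(\mathbf x)-\alpha_2)^2+\sum_{i,k=1}^{n_2}\frac{r_ir_k}{\sqrt{1+4\sigma_1^{*2}(\mathbf x)/\theta_{2y}}}\exp\Big(-\sum_{j=1}^d\frac{(x_j-x^{[2]}_{ij})^2+(x_j-x^{[2]}_{kj})^2}{\theta_{2j}}-a_{ik}(\mathbf x)\Big),$$ $$V_2(\mathbf x)=\tau_2^2\Big(1-\frac{1}{\sqrt{1+4\sigma_1^{*2}(\mathbf x)/\theta_{2y}}}\sum_{i,k=1}^{n_2}(\mathbf K_2^{-1})_{ik}\exp\Big(-\sum_{j=1}^d\frac{(x_j-x^{[2]}_{ij})^2+(x_j-x^{[2]}_{kj})^2}{\theta_{2j}}-a_{ik}(\mathbf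 x)\Big)\Big),$$ with $a_{ik}(\mathbf x)=\dfrac{(\frac{y^{[1]}_i+y^{[1]}_k}{2}-\mu_1^*(\mathbf x))^2}{\theta_{2y}/2+2\sigma_1^{*2}(\mathbf x)}+\dfrac{(y^{[1]}_i-y^{[1]}_k)^2}{2\theta_{2y}}$ and $\mu_2^*(\mathbf x)=\mathbb E[f_2(\mathbf x)\mid\mathbf y_1,\mathbf y_2]$.
   Context: Setting: $d\ge1$; nested designs $\mathcal X_2\subseteq\mathcal X_1\subset\mathbb R^d$, $\mathcal X_l=\{\mathbf x^{[l]}_1,\dots,\mathbf x^{[l]}_{n_l}\}$, with $\mathbf x^{[2]}_i=\mathbf x^{[1]}_i$ for $i\le n_2$; outputs $\mathbf y_l=(y^{[l]}_i)_i$. Parameters $\alpha_l\in\mathbb R$, $\tau_l^2>0$, $\theta_{lj},\theta_{2y}>0$. $K_1(\mathbf x,\mathbf x')=\prod_j\exp(-(x_j-x_j')^2/\theta_{1j})$; $K_2((\mathbf x,y),(\mathbf x',y'))=\exp(-(y-y')^2/\theta_{2y})\prod_j\exp(-(x_j-x_j')^2/\theta_{2j})$. $\mathbf K_1=(K_1(\mathbf x^{[1]}_i,\mathbf x^{[1]}_k))$, $\mathbf K_2=(K_2((\mathbf x^{[2]}_i,y^{[1]}_i),(\mathbf x^{[2]}_k,y^{[1]}_k)))$, invertible; $r_i=(\mathbf K_2^{-1}(\mathbf y_2-\alpha_2\mathbf 1_{n_2}))_i$. $\mu_1^*(\mathbf x)=\alpha_1+\mathbf k_1(\mathbf x)^T\mathbf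 K_1^{-1}(\mathbf y_1-\alpha_1\mathbf 1_{n_1})$, $\sigma_1^{*2}(\mathbf x)=\tau_1^2(1-\mathbf k_1(\mathbf x)^T\mathbf K_1^{-1}\mathbf k_1(\mathbf x))$ with $(\mathbf k_1(\mathbf x))_i=K_1(\mathbf x,\mathbf x^{[1]}_i)$. For $u\in\mathbb R$, $(\mathbf k_2(\mathbf x,u))_i=K_2((\mathbf x,u),(\mathbf x^{[2]}_i,y^{[1]}_i))$, $\mu_2(\mathbf x,u)=\alpha_2+\mathbf k_2(\mathbf x,u)^T\mathbf K_2^{-1}(\mathbf y_2-\alpha_2\mathbf 1_{n_2})$, $\sigma_2^2(\mathbf x,u)=\tau_2^2(1-\mathbf k_2(\mathbf x,u)^T\mathbf K_2^{-1}\mathbf k_2(\mathbf x,u))$. $x^{[2]}_{ij}$ is the $j$-th coordinate of $\mathbf x^{[2]}_i$. The outer expectation/variance in $V_1,V_2$ is over $f_1(\mathbf x)$ given the data. *)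

theory Defs
  imports "HOL-Analysis.Analysis" "HOL-Probability.Probability"
begin

definition sqexp :: "('d::finite \<Rightarrow> real) \<Rightarrow> real^'d \<Rightarrow> real^'d \<Rightarrow> real" where
  "sqexp theta x x' = (\<Prod>j\<in>UNIV. exp (- ((x $ j) - (x' $ j))\<^sup>2 / theta j))"

definition K2fun :: "('d::finite \<Rightarrow> real) \<Rightarrow> real \<Rightarrow> (real^'d) \<times> real \<Rightarrow> (real^'d) \<times> real \<Rightarrow> real" where
  "K2fun theta thy p q = exp (- (snd p - snd q)\<^sup>2 / thy) * sqexp theta (fst p) (fst q)"

definition is_inverse :: "nat \<Rightarrow> (nat \<Rightarrow> nat \<Rightarrow> real) \<Rightarrow> (nat \<Rightarrow> nat \<Rightarrow> real) \<Rightarrow> bool" where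
  "is_inverse n K Kinv \<longleftrightarrow>
     (\<forall>i<n. \<forall>k<n. (\<Sum>l<n. K i l * Kinv l k) = (if i = k then 1 else 0)) \<and>
     (\<forall>i<n. \<forall>k<n. (\<Sum>l<n. Kinv i l * K l k) = (if i = k then 1 else 0))"

definition gauss_measure :: "real \<Rightarrow> real \<Rightarrow> real measure" where
  "gauss_measure m v = (if 0 < v then density lborel (normal_density m (sqrt v)) else return lborel m)"

end

theory Submission
  imports Defs
begin


definition pdk :: "('a \<Rightarrow> 'a \<Rightarrow> real) \<Rightarrow> bool" where
  "pdk K \<longleftrightarrow> (\<forall>n p c. 0 \<le> (\<Sum>i<(n::nat). \<Sum>k<n. c i * c k * K (p i) (p k)))"

lemma pdkD: "pdk K \<Longrightarrow> 0 \<le> (\<Sum>i<(n::nat). \<Sum>k<n. c i * c k * K (p i) (p k))"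
  unfolding pdk_def by blast

lemma pdk_rank1:
  assumes "pdk K" shows "pdk (\<lambda>p q. K p q * (f p * f q))"
  unfolding pdk_def
proof (intro allI)
  fix n p c
  have "(\<Sum>i<(n::nat). \<Sum>k<n. c i * c k * (K (p i) (p k) * (f (p i) * f (p k))))
      = (\<Sum>i<n. \<Sum>k<n. (c i * f (p i)) * (c k * f (p k)) * K (p i) (p k))"
    by (simp add: algebra_simps)
  also have "\<dots> \<ge> 0" by (rule pdkD[OF assms])
  finally show "0 \<le> (\<Sum>i<n. \<Sum>k<n. c i * c k * (K (p i) (p k) * (f (p i) * f (p k))))" .
qed

lemma pdk_pow:
  assumes fin: "finite J"
  shows "pdk (\<lambda>p q. (\<Sum>j\<in>J. w j p * w j q) ^ m)"
proof (induction m)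
  case 0
  show ?case unfolding pdk_def
  proof (intro allI)
    fix n p and c :: "nat \<Rightarrow> real"
    have "(\<Sum>i<n. \<Sum>k<n. c i * c k * 1) = (\<Sum>i<n. c i)^2"
      by (simp add: power2_eq_square sum_product)
    then show "0 \<le> (\<Sum>i<n. \<Sum>k<n. c i * c k * (\<Sum>j\<in>J. w j (p i) * w j (p k)) ^ 0)" by simp
  qed
next
  case (Suc m)
  show ?case unfolding pdk_def
  proof (intro allI)
    fix n p and c :: "nat \<Rightarrow> real"
    let ?B = "\<lambda>p q. (\<Sum>j\<in>J. w j p * w j q)"
    have "(\<Sum>i<n. \<Sum>k<n. c i * c k * ?B (p i) (p k) ^ Suc m)
       = (\<Sum>j\<in>J. \<Sum>i<n. \<Sum>k<n. c i * c k * (?B (p i) (p k) ^ m * (w j (p i) * w j (p k))))"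
      by (simp add: sum_distrib_left sum_distrib_right algebra_simps sum.swap[of _ J])
    also have "\<dots> \<ge> 0"
      by (rule sum_nonneg) (rule pdkD[OF pdk_rank1[OF Suc.IH]])
    finally show "0 \<le> (\<Sum>i<n. \<Sum>k<n. c i * c k * ?B (p i) (p k) ^ Suc m)" .
  qed
qed

lemma pdk_exp:
  assumes fin: "finite J"
  shows "pdk (\<lambda>p q. h p * h q * exp (\<Sum>j\<in>J. w j p * w j q))"
proof -
  let ?B = "\<lambda>p q. (\<Sum>j\<in>J. w j p * w j q)"
  have "pdk (\<lambda>p q. exp (?B p q))" unfolding pdk_def
  proof (intro allI)
    fix n p and c :: "nat \<Rightarrow> real"
    have S: "(\<lambda>N. \<Sum>i<n. \<Sum>k<n. c i * c k * (?B (p i) (p k) ^ N /\<^sub>R fact N))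
          sums (\<Sum>i<n. \<Sum>k<n. c i * c k * exp (?B (p i) (p k)))"
      by (intro sums_sum sums_mult exp_converges)
    have N: "0 \<le> (\<Sum>i<n. \<Sum>k<n. c i * c k * (?B (p i) (p k) ^ N /\<^sub>R fact N))" for N
    proof -
      have "(\<Sum>i<n. \<Sum>k<n. c i * c k * (?B (p i) (p k) ^ N /\<^sub>R fact N))
         = (1 / fact N) * (\<Sum>i<n. \<Sum>k<n. c i * c k * ?B (p i) (p k) ^ N)"
        unfolding sum_distrib_left by (intro sum.cong refl) (simp add: divide_inverse)
      also have "\<dots> \<ge> 0"
        by (rule mult_nonneg_nonneg, simp, rule pdkD[OF pdk_pow[OF fin]])
      finally show ?thesis .
    qed
    show "0 \<le> (\<Sum>i<n. \<Sum>k<n. c i * c k * exp (?B (p i) (p k)))"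
      by (rule sums_le[OF N sums_zero S])
  qed
  from pdk_rank1[OF this, of h] show ?thesis by (simp add: mult_ac)
qed




lemma exp_sq_expand:
  assumes "(t::real) > 0"
  shows "exp (- ((a - b)\<^sup>2 / t)) = exp (- (a\<^sup>2 / t)) * exp (- (b\<^sup>2 / t)) * exp ((sqrt (2/t) * a) * (sqrt (2/t) * b))"
proof -
  have s: "sqrt (2/t) * a * (sqrt (2/t) * b) = 2 * a * b / t"
    using assms by (simp add: algebra_simps)
  show ?thesis unfolding s mult_exp_exp
    by (rule arg_cong[where f=exp]) (use assms in \<open>simp add: power2_eq_square field_simps\<close>)
qed

lemma exp_sq_expand':
  assumes "(t::real) > 0"
  shows "exp (- ((a - b)\<^sup>2 / t)) = exp (- (a\<^sup>2 / t)) * (exp (- (b\<^sup>2 / t)) * exp (a * (b * 2) / t))"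
  using exp_sq_expand[OF assms, of a b] assms by (simp add: mult_ac)

lemma sqexp_form:
  assumes th: "\<forall>j. theta j > 0"
  shows "sqexp theta p q = (\<Prod>j\<in>UNIV. exp (- ((p $ j)\<^sup>2 / theta j))) * (\<Prod>j\<in>UNIV. exp (- ((q $ j)\<^sup>2 / theta j)))
     * exp (\<Sum>j\<in>UNIV. (sqrt (2/theta j) * (p $ j)) * (sqrt (2/theta j) * (q $ j)))"
  unfolding sqexp_def exp_sum[OF finite_class.finite_UNIV] prod.distrib[symmetric]
  by (rule prod.cong[OF refl]) (simp add: exp_sq_expand th)

lemma pdk_sqexp:
  assumes th: "\<forall>j. theta j > 0"
  shows "pdk (sqexp theta)"
proof -
  have "sqexp theta = (\<lambda>p q. (\<Prod>j\<in>UNIV. exp (- ((p $ j)\<^sup>2 / theta j))) * (\<Prod>j\<in>UNIV. exp (- ((q $ j)\<^sup>2 / theta j)))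
     * exp (\<Sum>j\<in>UNIV. (sqrt (2/theta j) * (p $ j)) * (sqrt (2/theta j) * (q $ j))))"
    using sqexp_form[OF th] by blast
  then show ?thesis using pdk_exp[OF finite_class.finite_UNIV, of "\<lambda>p. (\<Prod>j\<in>UNIV. exp (- ((p $ j)\<^sup>2 / theta j)))"
        "\<lambda>j p. sqrt (2/theta j) * (p $ j)"] by simp
qed

lemma pdk_K2fun:
  fixes theta :: "'d::finite \<Rightarrow> real"
  assumes th: "\<forall>j. theta j > 0" and ty: "thy > 0"
  shows "pdk (K2fun theta thy)"
proof -
  define w :: "'d option \<Rightarrow> (real^'d) \<times> real \<Rightarrow> real" where
    "w = (\<lambda>jo p. case jo of None \<Rightarrow> sqrt (2/thy) * snd p | Some j \<Rightarrow> sqrt (2/theta j) * (fst p $ j))"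
  define h where "h = (\<lambda>p::(real^'d) \<times> real. exp (- ((snd p)\<^sup>2 / thy)) * (\<Prod>j\<in>UNIV. exp (- ((fst p $ j)\<^sup>2 / theta j))))"
  have sumo: "(\<Sum>jo\<in>UNIV. w jo p * w jo q) = w None p * w None q + (\<Sum>j\<in>UNIV. w (Some j) p * w (Some j) q)" for p q
    unfolding UNIV_option_conv
    by (subst sum.insert) (auto simp: sum.reindex)
  have "K2fun theta thy = (\<lambda>p q. h p * h q * exp (\<Sum>jo\<in>UNIV. w jo p * w jo q))"
  proof (intro ext)
    fix p q :: "(real^'d) \<times> real"
    show "K2fun theta thy p q = h p * h q * exp (\<Sum>jo\<in>UNIV. w jo p * w jo q)"
      unfolding K2fun_def sqexp_form[OF th] sumo exp_add exp_sq_expand[OF ty, of "snd p" "snd q"] h_def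
      using ty by (simp add: w_def mult_ac exp_sq_expand'[OF ty])
  qed
  then show ?thesis using pdk_exp[OF finite_class.finite_UNIV, of h w] by simp
qed

lemma quad_le:
  fixes K :: "'a \<Rightarrow> 'a \<Rightarrow> real"
  assumes pd: "pdk K" and sym: "\<And>a b. K a b = K b a" and diag: "K z z = 1"
    and inv: "is_inverse n (\<lambda>i k. K (p i) (p k)) Kinv"
  shows "(\<Sum>i<n. \<Sum>k<n. K z (p i) * Kinv i k * K z (p k)) \<le> 1"
proof -
  define kk where "kk = (\<lambda>i. K z (p i))"
  define c where "c = (\<lambda>i. if i < n then (\<Sum>l<n. Kinv i l * kk l) else -1)"
  define q where "q = p(n := z)"
  define Q where "Q = (\<Sum>i<n. \<Sum>k<n. kk i * Kinv i k * kk k)"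
  have inv1: "\<And>i k. i<n \<Longrightarrow> k<n \<Longrightarrow> (\<Sum>l<n. K (p i) (p l) * Kinv l k) = (if i = k then 1 else 0)"
    using inv unfolding is_inverse_def by blast
  have Kc: "(\<Sum>k<n. K (p i) (p k) * c k) = kk i" if "i < n" for i
  proof -
    have "(\<Sum>k<n. K (p i) (p k) * c k) = (\<Sum>k<n. \<Sum>l<n. K (p i) (p k) * Kinv k l * kk l)"
      by (simp add: c_def sum_distrib_left mult.assoc)
    also have "\<dots> = (\<Sum>l<n. (\<Sum>k<n. K (p i) (p k) * Kinv k l) * kk l)"
      by (subst sum.swap) (simp add: sum_distrib_right)
    also have "\<dots> = (\<Sum>l<n. (if i = l then 1 else 0) * kk l)"
      using inv1 that by simp
    also have "\<dots> = (\<Sum>l<n. if i = l then kk l else 0)" by (intro sum.cong) auto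
    also have "\<dots> = kk i" using that by simp
    finally show ?thesis .
  qed
  have ck: "(\<Sum>i<n. c i * kk i) = Q"
    by (simp add: Q_def c_def sum_distrib_left sum_distrib_right mult_ac)
  have A: "(\<Sum>i<n. \<Sum>k<n. c i * c k * K (p i) (p k)) = Q"
  proof -
    have "(\<Sum>i<n. \<Sum>k<n. c i * c k * K (p i) (p k)) = (\<Sum>i<n. c i * (\<Sum>k<n. K (p i) (p k) * c k))"
      by (simp add: sum_distrib_left mult_ac)
    also have "\<dots> = (\<Sum>i<n. c i * kk i)" using Kc by simp
    finally show ?thesis using ck by simp
  qed
  have "0 \<le> (\<Sum>i<Suc n. \<Sum>k<Suc n. c i * c k * K (q i) (q k))"
    by (rule pdkD[OF pd])
  also have "\<dots> = (\<Sum>i<n. \<Sum>k<n. c i * c k * K (p i) (p k)) - (\<Sum>i<n. c i * kk i) - (\<Sum>k<n. c k * kk k) + 1"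
  proof -
    have qi: "\<And>i. i \<in> {..<n} \<Longrightarrow> q i = p i" by (simp add: q_def)
    have qn: "q n = z" "c n = -1" by (simp_all add: q_def c_def)
    have "(\<Sum>i<Suc n. \<Sum>k<Suc n. c i * c k * K (q i) (q k))
        = (\<Sum>i<n. (\<Sum>k<n. c i * c k * K (q i) (q k)) + c i * c n * K (q i) (q n))
          + ((\<Sum>k<n. c n * c k * K (q n) (q k)) + c n * c n * K (q n) (q n))"
      by (simp only: sum.lessThan_Suc)
    also have "\<dots> = (\<Sum>i<n. (\<Sum>k<n. c i * c k * K (p i) (p k)) - c i * kk i)
          + (- (\<Sum>k<n. c k * kk k) + 1)"
    proof -
      have s1: "(\<Sum>k<n. c i * c k * K (q i) (q k)) = (\<Sum>k<n. c i * c k * K (p i) (p k))" if "i \<in> {..<n}" for i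
        using qi that by (intro sum.cong refl) simp
      have s2: "c i * c n * K (q i) (q n) = - (c i * kk i)" if "i \<in> {..<n}" for i
        using qi[OF that] qn by (simp add: kk_def sym[of "p i" z])
      have s3: "(\<Sum>k<n. c n * c k * K (q n) (q k)) = - (\<Sum>k<n. c k * kk k)"
        using qi qn by (simp add: kk_def sum_negf)
      have s4: "c n * c n * K (q n) (q n) = 1" using qn diag by simp
      show ?thesis using s1 s2 s3 s4 by (simp add: sum.distrib)
    qed
    finally show ?thesis by (simp add: sum_subtractf)
  qed
  also have "\<dots> = 1 - Q" using A ck by simp
  finally show ?thesis by (simp add: Q_def kk_def)
qed




lemma sets_gm[simp, measurable_cong]: "sets (gauss_measure m v) = sets borel"
  by (simp add: gauss_measure_def)

lemma space_gm[simp]: "space (gauss_measure m v) = UNIV"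
  by (simp add: gauss_measure_def)

lemma prob_space_gm: "prob_space (gauss_measure m v)"
  by (simp add: gauss_measure_def prob_space_normal_density prob_space_return)

lemma gm_pos_integral:
  fixes f :: "real \<Rightarrow> real"
  assumes v: "v > 0" and f[measurable]: "f \<in> borel_measurable borel"
  shows "integral\<^sup>L (gauss_measure m v) f = (\<integral>w. normal_density m (sqrt v) w * f w \<partial>lborel)"
    and "integrable (gauss_measure m v) f \<longleftrightarrow> integrable lborel (\<lambda>w. normal_density m (sqrt v) w * f w)"
  using v by (simp_all add: gauss_measure_def integral_density integrable_density)

lemma gm_zero_integral:
  fixes f :: "real \<Rightarrow> real"
  assumes f[measurable]: "f \<in> borel_measurable borel"
  shows "integral\<^sup>L (gauss_measure m 0) f = f m"
proof -
  have fm: "f \<in> borel_measurable lborel" by simp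
  show ?thesis unfolding gauss_measure_def by (simp add: integral_return[OF _ fm])
qed

lemma gm_zero_integrable:
  fixes f :: "real \<Rightarrow> real"
  assumes f[measurable]: "f \<in> borel_measurable borel"
  shows "integrable (gauss_measure m 0) f"
proof -
  have fm: "f \<in> borel_measurable (return lborel m)" using f by simp
  have "(\<integral>\<^sup>+ w. ennreal (norm (f w)) \<partial>return lborel m) = ennreal (norm (f m))"
    by (rule nn_integral_return) auto
  then have "integrable (return lborel m) f"
    by (intro integrableI_bounded[OF fm]) simp
  then show ?thesis unfolding gauss_measure_def by simp
qed

lemma gm_second:
  assumes v: "v \<ge> 0"
  shows "integrable (gauss_measure m v) (\<lambda>w. (w - c)\<^sup>2)"
    and "(\<integral>w. (w - c)\<^sup>2 \<partial>gauss_measure m v) = v + (m - c)\<^sup>2"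
proof -
  have "integrable (gauss_measure m v) (\<lambda>w. (w - c)\<^sup>2) \<and> (\<integral>w. (w - c)\<^sup>2 \<partial>gauss_measure m v) = v + (m - c)\<^sup>2"
  proof (cases "v = 0")
    case True then show ?thesis by (simp add: gm_zero_integral gm_zero_integrable)
  next
    case False
    then have vp: "v > 0" using v by simp
    define s where "s = sqrt v"
    have sp: "s > 0" and s2: "s\<^sup>2 = v" using vp v by (auto simp: s_def)
    have H2: "has_bochner_integral lborel (\<lambda>w. normal_density m s w * (w - m) ^ (2 * 1)) (s\<^sup>2)"
      using normal_moment_even[OF sp, of m 1] by simp
    have H1: "has_bochner_integral lborel (\<lambda>w. normal_density m s w * (w - m) ^ (2 * 0 + 1)) 0"
      using normal_moment_odd[OF sp, of m 0] by simp
    have H0: "has_bochner_integral lborel (\<lambda>w. normal_density m s w) 1"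
      using integral_normal_density[OF sp] integrable_normal_density[OF sp] by (simp add: has_bochner_integral_iff)
    have "has_bochner_integral lborel (\<lambda>w. normal_density m s w * (w - m) ^ (2 * 1)
        + (2 * (m - c)) * (normal_density m s w * (w - m) ^ (2 * 0 + 1)) + (m - c)\<^sup>2 * normal_density m s w)
        (s\<^sup>2 + (2 * (m - c)) * 0 + (m - c)\<^sup>2 * 1)"
      by (intro has_bochner_integral_add has_bochner_integral_mult_right H0 H1 H2)
    then have H: "has_bochner_integral lborel (\<lambda>w. normal_density m s w * (w - c)\<^sup>2) (v + (m - c)\<^sup>2)"
      by (rule has_bochner_integral_cong[THEN iffD1, rotated -1])
         (auto simp: s2[unfolded power2_eq_square] power2_eq_square algebra_simps)
    show ?thesis using H vp
      by (simp add: gm_pos_integral s_def has_bochner_integral_iff)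
  qed
  then show "integrable (gauss_measure m v) (\<lambda>w. (w - c)\<^sup>2)"
    and "(\<integral>w. (w - c)\<^sup>2 \<partial>gauss_measure m v) = v + (m - c)\<^sup>2" by auto
qed

lemma exponent_id:
  fixes v c m a w :: real
  assumes vp: "v > 0" and c: "c \<ge> 0"
  shows "- ((w - m)\<^sup>2 / (2 * v)) - c * (w - a)\<^sup>2 = - (c * (m - a)\<^sup>2 / (1 + 2*c * v)) - (w - (m + 2*c * v *a)/(1 + 2*c * v))\<^sup>2 / (2 * (v / (1 + 2*c * v)))"
proof -
  define t where "t = 1 + 2*c * v"
  have t: "t > 0" using vp c by (simp add: t_def add_pos_nonneg)
  have P: "- ((w - m)\<^sup>2 / (2 * v)) - c * (w - a)\<^sup>2 = (- t*(w - m)\<^sup>2 - 2*c * v *t*(w - a)\<^sup>2) / (2 * v *t)"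
    using vp t by (simp add: field_simps)
  have Q: "- (c * (m - a)\<^sup>2 / t) - (w - (m + 2*c * v *a)/t)\<^sup>2 / (2 * (v / t)) = (- 2*c * v *(m - a)\<^sup>2 - (t*w - m - 2*c * v *a)\<^sup>2) / (2 * v *t)"
    using vp t by (simp add: field_simps power2_eq_square)
  have E: "- t*(w - m)\<^sup>2 - 2*c * v *t*(w - a)\<^sup>2 = - 2*c * v *(m - a)\<^sup>2 - (t*w - m - 2*c * v *a)\<^sup>2"
    unfolding t_def by algebra
  show ?thesis using P Q E unfolding t_def by simp
qed

lemma gm_exp:
  assumes v: "v \<ge> 0" and c: "c \<ge> 0"
  shows "integrable (gauss_measure m v) (\<lambda>w. exp (- (c * (w - a)\<^sup>2)))"
    and "(\<integral>w. exp (- (c * (w - a)\<^sup>2)) \<partial>gauss_measure m v) = exp (- (c * (m - a)\<^sup>2 / (1 + 2*c * v))) / sqrt (1 + 2*c * v)"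
proof -
  have "integrable (gauss_measure m v) (\<lambda>w. exp (- (c * (w - a)\<^sup>2))) \<and>
    (\<integral>w. exp (- (c * (w - a)\<^sup>2)) \<partial>gauss_measure m v) = exp (- (c * (m - a)\<^sup>2 / (1 + 2*c * v))) / sqrt (1 + 2*c * v)"
  proof (cases "v = 0")
    case True then show ?thesis by (simp add: gm_zero_integral gm_zero_integrable)
  next
    case False
    then have vp: "v > 0" using v by simp
    define t where "t = 1 + 2*c * v"
    have t: "t > 0" using vp c by (simp add: t_def add_pos_nonneg)
    define m' where "m' = (m + 2*c * v *a)/t"
    define K where "K = exp (- (c * (m - a)\<^sup>2 / t)) / sqrt t"
    have pw: "normal_density m (sqrt v) w * exp (- (c * (w - a)\<^sup>2)) = K * normal_density m' (sqrt (v/t)) w" for w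
    proof -
      have e: "exp (- ((w - m)\<^sup>2 / (2 * v))) * exp (- (c * (w - a)\<^sup>2))
          = exp (- (c * (m - a)\<^sup>2 / t)) * exp (- ((w - m')\<^sup>2 / (2 * (v / t))))"
        unfolding mult_exp_exp using exponent_id[OF vp c, of w m a] by (simp add: t_def m'_def)
      have sq: "sqrt (2 * pi * v) = sqrt t * sqrt (2 * pi * (v / t))"
        using t by (simp add: real_sqrt_mult[symmetric])
      have "normal_density m (sqrt v) w * exp (- (c * (w - a)\<^sup>2))
          = 1 / sqrt (2 * pi * v) * (exp (- ((w - m)\<^sup>2 / (2 * v))) * exp (- (c * (w - a)\<^sup>2)))"
        using vp by (simp add: normal_density_def)
      also have "\<dots> = K * normal_density m' (sqrt (v/t)) w"
        unfolding e sq using vp t by (simp add: normal_density_def K_def)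
      finally show ?thesis .
    qed
    have H: "has_bochner_integral lborel (\<lambda>w. K * normal_density m' (sqrt (v/t)) w) (K * 1)"
      using vp t integral_normal_density[of "sqrt (v/t)" m'] integrable_normal_density[of "sqrt (v/t)" m']
      by (intro has_bochner_integral_mult_right) (simp add: has_bochner_integral_iff)
    then have H': "has_bochner_integral lborel (\<lambda>w. normal_density m (sqrt v) w * exp (- (c * (w - a)\<^sup>2))) K"
      using pw by simp
    show ?thesis using H' vp
      by (simp add: gm_pos_integral has_bochner_integral_iff K_def t_def)
  qed
  then show "integrable (gauss_measure m v) (\<lambda>w. exp (- (c * (w - a)\<^sup>2)))"
    and "(\<integral>w. exp (- (c * (w - a)\<^sup>2)) \<partial>gauss_measure m v) = exp (- (c * (m - a)\<^sup>2 / (1 + 2*c * v))) / sqrt (1 + 2*c * v)"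
    by auto
qed




lemma gm_kernel_measurable:
  fixes m v :: "'a \<Rightarrow> real"
  assumes [measurable]: "m \<in> borel_measurable M" "v \<in> borel_measurable M"
  shows "(\<lambda>u. gauss_measure (m u) (v u)) \<in> measurable M (subprob_algebra borel)"
proof (rule measurable_subprob_algebra)
  fix a show "subprob_space (gauss_measure (m a) (v a))"
    using prob_space_gm by (rule prob_space_imp_subprob_space)
next
  fix a show "sets (gauss_measure (m a) (v a)) = sets borel" by simp
next
  fix A :: "real set" assume A[measurable]: "A \<in> sets borel"
  have eq: "emeasure (gauss_measure (m u) (v u)) A =
    (if 0 < v u then \<integral>\<^sup>+w. ennreal (normal_density (m u) (sqrt (v u)) w) * indicator A w \<partial>lborel
     else indicator A (m u))" for u
    by (simp add: gauss_measure_def emeasure_density)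
  show "(\<lambda>u. emeasure (gauss_measure (m u) (v u)) A) \<in> borel_measurable M"
  proof -
    have nd: "(\<lambda>(u, w). ennreal (normal_density (m u) (sqrt (v u)) w) * indicator A w) \<in> borel_measurable (M \<Otimes>\<^sub>M lborel)"
      unfolding normal_density_def by measurable
    have 1: "(\<lambda>u. \<integral>\<^sup>+w. ennreal (normal_density (m u) (sqrt (v u)) w) * indicator A w \<partial>lborel) \<in> borel_measurable M"
      using lborel.borel_measurable_nn_integral[OF nd] by simp
    have 2: "(\<lambda>u. indicator A (m u) :: ennreal) \<in> borel_measurable M" by measurable
    have 3: "{u \<in> space M. 0 < v u} \<in> sets M" by measurable
    show ?thesis unfolding eq by (rule measurable_If[OF 1 2 3])
  qed
qed

lemma mix_second:
  fixes M :: "'a measure" and m v :: "'a \<Rightarrow> real"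
  assumes P: "prob_space M"
    and [measurable]: "m \<in> borel_measurable M" "v \<in> borel_measurable M"
    and vnn: "\<And>u. v u \<ge> 0"
    and int: "integrable M (\<lambda>u. v u + (m u - c)\<^sup>2)"
  shows "integrable (M \<bind> (\<lambda>u. gauss_measure (m u) (v u))) (\<lambda>w. (w - c)\<^sup>2)"
    and "(\<integral>w. (w - c)\<^sup>2 \<partial>(M \<bind> (\<lambda>u. gauss_measure (m u) (v u)))) = (\<integral>u. v u + (m u - c)\<^sup>2 \<partial>M)"
proof -
  let ?N = "\<lambda>u. gauss_measure (m u) (v u)"
  have N: "?N \<in> measurable M (subprob_algebra borel)" by (rule gm_kernel_measurable) simp_all
  have inner: "(\<integral>\<^sup>+w. ennreal ((w - c)\<^sup>2) \<partial>?N u) = ennreal (v u + (m u - c)\<^sup>2)" for u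
    using gm_second[OF vnn[of u], of "m u" c] by (subst nn_integral_eq_integral) auto
  have "(\<integral>\<^sup>+w. ennreal ((w - c)\<^sup>2) \<partial>(M \<bind> ?N)) = (\<integral>\<^sup>+u. \<integral>\<^sup>+w. ennreal ((w - c)\<^sup>2) \<partial>?N u \<partial>M)"
    by (rule nn_integral_bind[OF _ N]) simp
  also have "\<dots> = (\<integral>\<^sup>+u. ennreal (v u + (m u - c)\<^sup>2) \<partial>M)" by (simp add: inner)
  also have "\<dots> = ennreal (\<integral>u. v u + (m u - c)\<^sup>2 \<partial>M)"
    using int vnn by (subst nn_integral_eq_integral) (auto intro: add_nonneg_nonneg)
  finally have nn: "(\<integral>\<^sup>+w. ennreal ((w - c)\<^sup>2) \<partial>(M \<bind> ?N)) = ennreal (\<integral>u. v u + (m u - c)\<^sup>2 \<partial>M)" .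
  have meas: "(\<lambda>w. (w - c)\<^sup>2) \<in> borel_measurable (M \<bind> ?N)"
  proof -
    have sb: "sets (M \<bind> ?N) = sets borel"
      by (rule sets_bind) (simp_all add: prob_space.not_empty[OF P])
    show ?thesis unfolding measurable_cong_sets[OF sb refl] by simp
  qed
  show "integrable (M \<bind> ?N) (\<lambda>w. (w - c)\<^sup>2)"
    by (rule integrableI_nn_integral_finite[OF meas _ nn]) simp
  have "0 \<le> (\<integral>u. v u + (m u - c)\<^sup>2 \<partial>M)" by (rule integral_nonneg_AE) (simp add: vnn add_nonneg_nonneg)
  then show "(\<integral>w. (w - c)\<^sup>2 \<partial>(M \<bind> ?N)) = (\<integral>u. v u + (m u - c)\<^sup>2 \<partial>M)"
    by (subst integral_eq_nn_integral[OF meas]) (simp_all add: nn)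
qed

lemma mix_mean:
  fixes M :: "'a measure" and m v :: "'a \<Rightarrow> real"
  assumes P: "prob_space M"
    and [measurable]: "m \<in> borel_measurable M" "v \<in> borel_measurable M"
    and vnn: "\<And>u. v u \<ge> 0"
    and im: "integrable M m" and iv: "integrable M v" and im2: "integrable M (\<lambda>u. (m u)\<^sup>2)"
  shows "(\<integral>w. w \<partial>(M \<bind> (\<lambda>u. gauss_measure (m u) (v u)))) = (\<integral>u. m u \<partial>M)"
proof -
  interpret P: prob_space M by (rule P)
  let ?N = "\<lambda>u. gauss_measure (m u) (v u)"
  let ?B = "M \<bind> ?N"
  have N: "?N \<in> measurable M (subprob_algebra borel)" by (rule gm_kernel_measurable) simp_all
  have PB: "prob_space ?B"
    by (rule P.prob_space_bind[OF _ N]) (simp add: prob_space_gm)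
  interpret B: prob_space ?B by (rule PB)
  have ic: "integrable M (\<lambda>u. v u + (m u - c)\<^sup>2)" for c
  proof -
    have "integrable M (\<lambda>u. v u + ((m u)\<^sup>2 - 2 * c * m u + c\<^sup>2))"
      by (intro Bochner_Integration.integrable_add Bochner_Integration.integrable_diff integrable_mult_right iv im im2 P.integrable_const)
    moreover have "(\<lambda>u. v u + ((m u)\<^sup>2 - 2 * c * m u + c\<^sup>2)) = (\<lambda>u. v u + (m u - c)\<^sup>2)"
      by (simp add: power2_diff algebra_simps)
    ultimately show ?thesis by simp
  qed
  note S1 = mix_second[OF P _ _ vnn ic[of "-1"]]
  note S0 = mix_second[OF P _ _ vnn ic[of 0]]
  have "(\<integral>w. w \<partial>?B) = (\<integral>w. ((w - (-1))\<^sup>2 - (w - 0)\<^sup>2 - 1) / 2 \<partial>?B)"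
    by (intro Bochner_Integration.integral_cong refl) (simp add: power2_eq_square algebra_simps)
  also have "\<dots> = ((\<integral>w. (w - (-1))\<^sup>2 \<partial>?B) - (\<integral>w. (w - 0)\<^sup>2 \<partial>?B) - 1) / 2"
    using S1(1) S0(1) B.prob_space by (simp add: Bochner_Integration.integral_diff)
  also have "\<dots> = ((\<integral>u. v u + (m u - (-1))\<^sup>2 \<partial>M) - (\<integral>u. v u + (m u - 0)\<^sup>2 \<partial>M) - 1) / 2"
    using S1(2) S0(2) by simp
  also have "\<dots> = ((\<integral>u. (v u + (m u - (-1))\<^sup>2) - (v u + (m u - 0)\<^sup>2) \<partial>M) - 1) / 2"
    by (subst Bochner_Integration.integral_diff[OF ic[of "-1"] ic[of 0]]) simp
  also have "\<dots> = ((\<integral>u. 2 * m u + 1 \<partial>M) - 1) / 2"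
    by (intro arg_cong2[where f="(/)"] arg_cong2[where f="(-)"] Bochner_Integration.integral_cong refl)
       (simp add: power2_eq_square algebra_simps)
  also have "\<dots> = (\<integral>u. m u \<partial>M)"
    using im P.prob_space by (simp add: Bochner_Integration.integral_add)
  finally show ?thesis .
qed




lemma sqexp_sym: "sqexp theta a b = sqexp theta b a"
  unfolding sqexp_def by (simp add: power2_commute)

lemma sqexp_diag: "sqexp theta a a = 1"
  unfolding sqexp_def by simp

lemma K2fun_sym: "K2fun theta thy a b = K2fun theta thy b a"
  unfolding K2fun_def by (simp add: power2_commute sqexp_sym)

lemma K2fun_diag: "K2fun theta thy a a = 1"
  unfolding K2fun_def by (simp add: sqexp_diag)

lemma sqexp_pos: "sqexp theta a b > 0"
  unfolding sqexp_def by (simp add: prod_pos)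

lemma sqexp_le1:
  assumes "\<forall>j. theta j > 0" shows "sqexp theta a b \<le> 1"
  unfolding sqexp_def using assms
  by (intro prod_le_1) (auto intro: divide_nonneg_pos)

lemma sqexp_mult:
  "sqexp theta x p * sqexp theta x q = exp (- (\<Sum>j\<in>UNIV. ((x $ j - p $ j)\<^sup>2 + (x $ j - q $ j)\<^sup>2) / theta j))"
proof -
  have "sqexp theta x p * sqexp theta x q = exp (\<Sum>j\<in>UNIV. - ((x $ j - p $ j)\<^sup>2 / theta j)) * exp (\<Sum>j\<in>UNIV. - ((x $ j - q $ j)\<^sup>2 / theta j))"
    by (simp add: sqexp_def exp_sum)
  also have "\<dots> = exp (- (\<Sum>j\<in>UNIV. ((x $ j - p $ j)\<^sup>2 + (x $ j - q $ j)\<^sup>2) / theta j))"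
    unfolding mult_exp_exp
    by (simp add: sum_negf[symmetric] sum.distrib[symmetric] add_divide_distrib)
  finally show ?thesis .
qed

lemma K2_prod_integral:
  fixes x p1 p2 :: "real^'d::finite" and theta :: "'d \<Rightarrow> real" and a1 a2 thy mu s :: real
  assumes s: "s \<ge> 0" and ty: "thy > 0"
  defines "F \<equiv> \<lambda>u. K2fun theta thy (x, u) (p1, a1) * K2fun theta thy (x, u) (p2, a2)"
  shows "integrable (gauss_measure mu s) F"
    and "(\<integral>u. F u \<partial>gauss_measure mu s) = exp (- (\<Sum>j\<in>UNIV. ((x $ j - p1 $ j)\<^sup>2 + (x $ j - p2 $ j)\<^sup>2) / theta j)
            - (((a1 + a2) / 2 - mu)\<^sup>2 / (thy / 2 + 2 * s) + (a1 - a2)\<^sup>2 / (2 * thy))) / sqrt (1 + 4 * s / thy)"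
proof -
  define C where "C = sqexp theta x p1 * sqexp theta x p2 * exp (- ((a1 - a2)\<^sup>2 / (2 * thy)))"
  define c where "c = 2 / thy"
  have c: "c \<ge> 0" using ty by (simp add: c_def)
  have Feq: "F = (\<lambda>u. C * exp (- (c * (u - (a1 + a2) / 2)\<^sup>2)))"
  proof
    fix u
    have "(u - a1)\<^sup>2 / thy + (u - a2)\<^sup>2 / thy = c * (u - (a1 + a2) / 2)\<^sup>2 + (a1 - a2)\<^sup>2 / (2 * thy)"
      using ty by (simp add: c_def field_simps power2_eq_square)
    then have "exp (- ((u - a1)\<^sup>2 / thy)) * exp (- ((u - a2)\<^sup>2 / thy))
        = exp (- ((a1 - a2)\<^sup>2 / (2 * thy))) * exp (- (c * (u - (a1 + a2) / 2)\<^sup>2))"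
      unfolding mult_exp_exp by (simp add: algebra_simps)
    then show "F u = C * exp (- (c * (u - (a1 + a2) / 2)\<^sup>2))"
      unfolding F_def C_def K2fun_def by (simp add: power2_commute[of u] mult_ac)
  qed
  note G = gm_exp[OF s c, of mu "(a1 + a2) / 2"]
  show "integrable (gauss_measure mu s) F" unfolding Feq using G(1) by simp
  have "(\<integral>u. F u \<partial>gauss_measure mu s) = C * (exp (- (c * (mu - (a1 + a2) / 2)\<^sup>2 / (1 + 2 * c * s))) / sqrt (1 + 2 * c * s))"
    unfolding Feq using G(2) by simp
  also have "\<dots> = exp (- (\<Sum>j\<in>UNIV. ((x $ j - p1 $ j)\<^sup>2 + (x $ j - p2 $ j)\<^sup>2) / theta j)
            - (((a1 + a2) / 2 - mu)\<^sup>2 / (thy / 2 + 2 * s) + (a1 - a2)\<^sup>2 / (2 * thy))) / sqrt (1 + 4 * s / thy)"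
  proof -
    have e1: "1 + 2 * c * s = 1 + 4 * s / thy" by (simp add: c_def)
    have e2: "c * (mu - (a1 + a2) / 2)\<^sup>2 / (1 + 2 * c * s) = ((a1 + a2) / 2 - mu)\<^sup>2 / (thy / 2 + 2 * s)"
      using ty s by (simp add: c_def power2_commute[of mu] field_simps add_pos_nonneg) (simp add: power2_commute)
    show ?thesis
      apply (subst e2)
      apply (subst e1)
      unfolding C_def sqexp_mult
      by (simp add: exp_diff exp_add exp_minus field_simps)
  qed
  finally show "(\<integral>u. F u \<partial>gauss_measure mu s) = exp (- (\<Sum>j\<in>UNIV. ((x $ j - p1 $ j)\<^sup>2 + (x $ j - p2 $ j)\<^sup>2) / theta j)
            - (((a1 + a2) / 2 - mu)\<^sup>2 / (thy / 2 + 2 * s) + (a1 - a2)\<^sup>2 / (2 * thy))) / sqrt (1 + 4 * s / thy)" .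
qed




lemma prod3_le:
  fixes p A q :: real
  assumes "0 \<le> p" "p \<le> 1" "0 \<le> q" "q \<le> 1" "0 \<le> A"
  shows "p * A * q \<le> A"
proof -
  have "p * A * q \<le> p * A" using assms by (intro mult_right_le_one_le) auto
  also have "\<dots> \<le> A" using assms by (intro mult_left_le_one_le) auto
  finally show ?thesis .
qed

theorem mainTheorem3:
  fixes x :: "real^'d::finite"
    and X1 :: "nat \<Rightarrow> real^'d"
    and n1 n2 :: nat
    and y1 y2 :: "nat \<Rightarrow> real"
    and alpha1 alpha2 tau1sq tau2sq theta2y :: real
    and theta1 theta2 :: "'d \<Rightarrow> real"
    and Kinv1 Kinv2 :: "nat \<Rightarrow> nat \<Rightarrow> real"
  assumes nested: "n2 \<le> n1"
    and tau1: "tau1sq > 0" and tau2: "tau2sq > 0"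
    and th1: "\<forall>j. theta1 j > 0" and th2: "\<forall>j. theta2 j > 0" and th2y: "theta2y > 0"
    and inv1: "is_inverse n1 (\<lambda>i k. sqexp theta1 (X1 i) (X1 k)) Kinv1"
    and inv2: "is_inverse n2 (\<lambda>i k. K2fun theta2 theta2y (X1 i, y1 i) (X1 k, y1 k)) Kinv2"
  shows
   "let mu1 = alpha1 + (\<Sum>i<n1. \<Sum>k<n1.
              sqexp theta1 x (X1 i) * Kinv1 i k * (y1 k - alpha1));
        s1 = tau1sq * (1 - (\<Sum>i<n1. \<Sum>k<n1.
              sqexp theta1 x (X1 i) * Kinv1 i k * sqexp theta1 x (X1 k)));
        r = (\<lambda>i. \<Sum>k<n2. Kinv2 i k * (y2 k - alpha2));
        mu2 = (\<lambda>u. alpha2 + (\<Sum>i<n2. K2fun theta2 theta2y (x, u) (X1 i, y1 i) * r i));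
        s2 = (\<lambda>u. tau2sq * (1 - (\<Sum>i<n2. \<Sum>k<n2.
              K2fun theta2 theta2y (x, u) (X1 i, y1 i) * Kinv2 i k
                * K2fun theta2 theta2y (x, u) (X1 k, y1 k))));
        P1 = gauss_measure mu1 s1;
        P2 = bind P1 (\<lambda>u. gauss_measure (mu2 u) (s2 u));
        mu2star = (\<integral>v. v \<partial>P2);
        s2star = (\<integral>v. (v - mu2star)\<^sup>2 \<partial>P2);
        V1 = (\<integral>u. (mu2 u - (\<integral>w. mu2 w \<partial>P1))\<^sup>2 \<partial>P1);
        V2 = (\<integral>u. s2 u \<partial>P1);
        a = (\<lambda>i k. ((y1 i + y1 k) / 2 - mu1)\<^sup>2 / (theta2y / 2 + 2 * s1)
                     + (y1 i - y1 k)\<^sup>2 / (2 * theta2y));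
        E = (\<lambda>i k. exp (- (\<Sum>j\<in>UNIV. (((x $ j) - (X1 i $ j))\<^sup>2 + ((x $ j) - (X1 k $ j))\<^sup>2) / theta2 j)
                         - a i k))
    in s2star = V1 + V2
     \<and> V1 = - (mu2star - alpha2)\<^sup>2
          + (\<Sum>i<n2. \<Sum>k<n2. r i * r k / sqrt (1 + 4 * s1 / theta2y) * E i k)
     \<and> V2 = tau2sq * (1 - 1 / sqrt (1 + 4 * s1 / theta2y) * (\<Sum>i<n2. \<Sum>k<n2. Kinv2 i k * E i k))"
proof -
  define mu1 where "mu1 = alpha1 + (\<Sum>i<n1. \<Sum>k<n1.
              sqexp theta1 x (X1 i) * Kinv1 i k * (y1 k - alpha1))"
  define s1 where "s1 = tau1sq * (1 - (\<Sum>i<n1. \<Sum>k<n1.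
              sqexp theta1 x (X1 i) * Kinv1 i k * sqexp theta1 x (X1 k)))"
  define r where "r = (\<lambda>i. \<Sum>k<n2. Kinv2 i k * (y2 k - alpha2))"
  define g where "g = (\<lambda>i u. K2fun theta2 theta2y (x, u) (X1 i, y1 i))"
  define mu2 where "mu2 = (\<lambda>u. alpha2 + (\<Sum>i<n2. K2fun theta2 theta2y (x, u) (X1 i, y1 i) * r i))"
  define s2 where "s2 = (\<lambda>u. tau2sq * (1 - (\<Sum>i<n2. \<Sum>k<n2.
              K2fun theta2 theta2y (x, u) (X1 i, y1 i) * Kinv2 i k
                * K2fun theta2 theta2y (x, u) (X1 k, y1 k))))"
  define P1 where "P1 = gauss_measure mu1 s1"
  define P2 where "P2 = bind P1 (\<lambda>u. gauss_measure (mu2 u) (s2 u))"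
  define mu2star where "mu2star = (\<integral>v. v \<partial>P2)"
  define s2star where "s2star = (\<integral>v. (v - mu2star)\<^sup>2 \<partial>P2)"
  define V1 where "V1 = (\<integral>u. (mu2 u - (\<integral>w. mu2 w \<partial>P1))\<^sup>2 \<partial>P1)"
  define V2 where "V2 = (\<integral>u. s2 u \<partial>P1)"
  define a where "a = (\<lambda>i k. ((y1 i + y1 k) / 2 - mu1)\<^sup>2 / (theta2y / 2 + 2 * s1)
                     + (y1 i - y1 k)\<^sup>2 / (2 * theta2y))"
  define E where "E = (\<lambda>i k. exp (- (\<Sum>j\<in>UNIV. (((x $ j) - (X1 i $ j))\<^sup>2 + ((x $ j) - (X1 k $ j))\<^sup>2) / theta2 j)
                         - a i k))"
  define sq where "sq = sqrt (1 + 4 * s1 / theta2y)"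
  have mu2g: "mu2 = (\<lambda>u. alpha2 + (\<Sum>i<n2. g i u * r i))" by (simp add: mu2_def g_def)
  have s2g: "s2 = (\<lambda>u. tau2sq * (1 - (\<Sum>i<n2. \<Sum>k<n2. g i u * Kinv2 i k * g k u)))"
    by (simp add: s2_def g_def)
  have s1nn: "s1 \<ge> 0"
  proof -
    have "(\<Sum>i<n1. \<Sum>k<n1. sqexp theta1 x (X1 i) * Kinv1 i k * sqexp theta1 x (X1 k)) \<le> 1"
      by (rule quad_le[OF pdk_sqexp[OF th1] sqexp_sym sqexp_diag inv1])
    then show ?thesis unfolding s1_def using tau1 by simp
  qed
  have s2nn: "s2 u \<ge> 0" for u
  proof -
    have "(\<Sum>i<n2. \<Sum>k<n2. K2fun theta2 theta2y (x, u) (X1 i, y1 i) * Kinv2 i k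
                * K2fun theta2 theta2y (x, u) (X1 k, y1 k)) \<le> 1"
      by (rule quad_le[OF pdk_K2fun[OF th2 th2y] K2fun_sym K2fun_diag inv2])
    then show ?thesis unfolding s2_def using tau2 by simp
  qed
  interpret P1: prob_space P1 unfolding P1_def by (rule prob_space_gm)
  have sP1[simp, measurable_cong]: "sets P1 = sets borel" by (simp add: P1_def)
  have gm[measurable]: "g i \<in> borel_measurable borel" for i
    unfolding g_def K2fun_def by simp
  have gnn: "g i u \<ge> 0" for i u
    unfolding g_def K2fun_def using sqexp_pos[of theta2 x "X1 i"] by simp
  have gle: "g i u \<le> 1" for i u
  proof -
    have "exp (- ((u - y1 i)\<^sup>2 / theta2y)) \<le> 1" using th2y by simp
    moreover have "sqexp theta2 x (X1 i) \<le> 1" by (rule sqexp_le1[OF th2])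
    ultimately show ?thesis unfolding g_def K2fun_def
      by (simp add: mult_le_one sqexp_pos less_imp_le)
  qed
  have bint: "integrable P1 f" if "f \<in> borel_measurable borel" "\<And>u. \<bar>f u\<bar> \<le> B" for f :: "real \<Rightarrow> real" and B
    by (rule P1.integrable_const_bound[where B=B]) (use that in auto)
  have mu2m[measurable]: "mu2 \<in> borel_measurable borel" unfolding mu2g by measurable
  have s2m[measurable]: "s2 \<in> borel_measurable borel" unfolding s2g by measurable
  define Bm where "Bm = \<bar>alpha2\<bar> + (\<Sum>i<n2. \<bar>r i\<bar>)"
  have mu2b: "\<bar>mu2 u\<bar> \<le> Bm" for u
  proof -
    have "\<bar>\<Sum>i<n2. g i u * r i\<bar> \<le> (\<Sum>i<n2. \<bar>g i u * r i\<bar>)" by (rule sum_abs)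
    also have "\<dots> \<le> (\<Sum>i<n2. \<bar>r i\<bar>)"
      by (intro sum_mono) (simp add: abs_mult gnn mult_left_le_one_le gle)
    finally show ?thesis unfolding mu2g Bm_def by (simp add: abs_triangle_ineq order_trans[OF abs_triangle_ineq])
  qed
  define Bs where "Bs = tau2sq * (1 + (\<Sum>i<n2. \<Sum>k<n2. \<bar>Kinv2 i k\<bar>))"
  have s2b: "\<bar>s2 u\<bar> \<le> Bs" for u
  proof -
    have "\<bar>\<Sum>i<n2. \<Sum>k<n2. g i u * Kinv2 i k * g k u\<bar> \<le> (\<Sum>i<n2. \<Sum>k<n2. \<bar>g i u * Kinv2 i k * g k u\<bar>)"
      by (rule order_trans[OF sum_abs sum_mono[OF sum_abs]])
    also have "\<dots> \<le> (\<Sum>i<n2. \<Sum>k<n2. \<bar>Kinv2 i k\<bar>)"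
      by (intro sum_mono) (simp add: abs_mult gnn gle prod3_le)
    finally have "\<bar>1 - (\<Sum>i<n2. \<Sum>k<n2. g i u * Kinv2 i k * g k u)\<bar> \<le> 1 + (\<Sum>i<n2. \<Sum>k<n2. \<bar>Kinv2 i k\<bar>)"
      by linarith
    then show ?thesis unfolding s2g Bs_def using tau2 by (simp add: abs_mult)
  qed
  have int_mu2: "integrable P1 mu2" by (rule bint[OF mu2m mu2b])
  have int_s2: "integrable P1 s2" by (rule bint[OF s2m s2b])
  have int_sq: "integrable P1 (\<lambda>u. (mu2 u - c)\<^sup>2)" for c
  proof (rule bint[of "\<lambda>u. (mu2 u - c)\<^sup>2" "(Bm + \<bar>c\<bar>)\<^sup>2"])
    show "(\<lambda>u. (mu2 u - c)\<^sup>2) \<in> borel_measurable borel" by measurable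
    fix u
    have "\<bar>mu2 u - c\<bar> \<le> Bm + \<bar>c\<bar>" using mu2b[of u] by linarith
    from power_mono[OF this abs_ge_zero, of 2]
    show "\<bar>(mu2 u - c)\<^sup>2\<bar> \<le> (Bm + \<bar>c\<bar>)\<^sup>2" by simp
  qed
  have Iint: "integrable P1 (\<lambda>u. g i u * g k u)" for i k
    unfolding g_def P1_def by (rule K2_prod_integral(1)[OF s1nn th2y])
  have Ival: "(\<integral>u. g i u * g k u \<partial>P1) = E i k / sq" for i k
    unfolding g_def P1_def E_def a_def sq_def
    by (subst K2_prod_integral(2)[OF s1nn th2y]) (simp add: algebra_simps)
  have M2: "mu2star = (\<integral>u. mu2 u \<partial>P1)"
    unfolding mu2star_def P2_def
    by (rule mix_mean[OF _ _ _ s2nn int_mu2 int_s2]) (use int_sq[of 0] in \<open>simp_all add: P1.prob_space_axioms\<close>)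
  have iV: "integrable P1 (\<lambda>u. s2 u + (mu2 u - mu2star)\<^sup>2)"
    using int_s2 int_sq by simp
  have C1: "s2star = V1 + V2"
  proof -
    have "s2star = (\<integral>u. s2 u + (mu2 u - mu2star)\<^sup>2 \<partial>P1)"
      unfolding s2star_def P2_def
      by (rule mix_second(2)[OF _ _ _ s2nn iV]) (simp_all add: P1.prob_space_axioms)
    also have "\<dots> = V2 + V1"
      unfolding V1_def V2_def M2[symmetric] using int_s2 int_sq by simp
    finally show ?thesis by simp
  qed
  have sqD: "(\<integral>u. (mu2 u - alpha2)\<^sup>2 \<partial>P1) = (\<Sum>i<n2. \<Sum>k<n2. r i * r k / sq * E i k)"
  proof -
    have "(\<integral>u. (mu2 u - alpha2)\<^sup>2 \<partial>P1) = (\<integral>u. (\<Sum>i<n2. \<Sum>k<n2. r i * r k * (g i u * g k u)) \<partial>P1)"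
      unfolding mu2g by (intro Bochner_Integration.integral_cong refl)
        (simp add: power2_eq_square sum_product mult_ac)
    also have "\<dots> = (\<Sum>i<n2. \<Sum>k<n2. r i * r k * (\<integral>u. g i u * g k u \<partial>P1))"
      using Iint by (simp add: Bochner_Integration.integral_sum)
    also have "\<dots> = (\<Sum>i<n2. \<Sum>k<n2. r i * r k / sq * E i k)"
      by (simp add: Ival)
    finally show ?thesis .
  qed
  have C2: "V1 = - (mu2star - alpha2)\<^sup>2 + (\<Sum>i<n2. \<Sum>k<n2. r i * r k / sq * E i k)"
  proof -
    define d where "d = mu2star - alpha2"
    have mD: "(\<integral>u. mu2 u - alpha2 \<partial>P1) = d"
      using int_mu2 P1.prob_space by (simp add: d_def M2)
    have "V1 = (\<integral>u. (mu2 u - alpha2)\<^sup>2 - 2 * d * (mu2 u - alpha2) + d\<^sup>2 \<partial>P1)"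
      unfolding V1_def M2[symmetric] d_def
      by (intro Bochner_Integration.integral_cong refl) (simp add: power2_eq_square algebra_simps)
    also have "\<dots> = (\<integral>u. (mu2 u - alpha2)\<^sup>2 \<partial>P1) - 2 * d * (\<integral>u. mu2 u - alpha2 \<partial>P1) + d\<^sup>2"
      using int_sq[of alpha2] int_mu2 P1.prob_space by simp
    also have "\<dots> = - d\<^sup>2 + (\<Sum>i<n2. \<Sum>k<n2. r i * r k / sq * E i k)"
      unfolding mD sqD by (simp add: power2_eq_square)
    finally show ?thesis by (simp add: d_def)
  qed
  have C3: "V2 = tau2sq * (1 - 1 / sq * (\<Sum>i<n2. \<Sum>k<n2. Kinv2 i k * E i k))"
  proof -
    have "V2 = (\<integral>u. tau2sq * (1 - (\<Sum>i<n2. \<Sum>k<n2. Kinv2 i k * (g i u * g k u))) \<partial>P1)"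
      unfolding V2_def s2g by (intro Bochner_Integration.integral_cong refl) (simp add: mult_ac)
    also have "\<dots> = tau2sq * (1 - (\<Sum>i<n2. \<Sum>k<n2. Kinv2 i k * (\<integral>u. g i u * g k u \<partial>P1)))"
      using Iint P1.prob_space by (simp add: Bochner_Integration.integral_sum)
    also have "\<dots> = tau2sq * (1 - 1 / sq * (\<Sum>i<n2. \<Sum>k<n2. Kinv2 i k * E i k))"
      by (simp add: Ival sum_distrib_left)
    finally show ?thesis .
  qed
  have main: "s2star = V1 + V2
     \<and> V1 = - (mu2star - alpha2)\<^sup>2
          + (\<Sum>i<n2. \<Sum>k<n2. r i * r k / sqrt (1 + 4 * s1 / theta2y) * E i k)
     \<and> V2 = tau2sq * (1 - 1 / sqrt (1 + 4 * s1 / theta2y) * (\<Sum>i<n2. \<Sum>k<n2. Kinv2 i k * E i k))"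
    using C1 C2 C3 by (simp add: sq_def)
  show ?thesis
    unfolding mu1_def[symmetric] Let_def[of mu1]
    unfolding s1_def[symmetric] Let_def[of s1]
    unfolding r_def[symmetric] Let_def[of r]
    unfolding mu2_def[symmetric] Let_def[of mu2]
    unfolding s2_def[symmetric] Let_def[of s2]
    unfolding P1_def[symmetric] Let_def[of P1]
    unfolding P2_def[symmetric] Let_def[of P2]
    unfolding mu2star_def[symmetric] Let_def[of mu2star]
    unfolding s2star_def[symmetric] Let_def[of s2star]
    unfolding V1_def[symmetric] Let_def[of V1]
    unfolding V2_def[symmetric] Let_def[of V2]
    unfolding a_def[symmetric] Let_def[of a]
    unfolding E_def[symmetric] Let_def[of E]
    by (rule main)
qed


end
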